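(* Let $X, Y \subseteq \omega$. There exists an embedding $\mathcal{K}^X_2 \hookrightarrow \mathcal{K}^Y_2$ if and only if $X \le_T Y$.
   Context: A pca is a set with a partial binary application operation containing distinct $\mathrm{s},\mathrm{k}$ with $\mathrm{k}ab\downarrow=a$, $\mathrm{s}ab\downarrow$, $\mathrm{s}abc\simeq(ac)(bc)$. An embedding of pcas is an injective map $f$ with: if $ab$ is defined then $f(a)f(b)$ is defined and equals $f(ab)$. $\mathcal{K}_2^Z$: elements are the total $Z$-computable functions $g:\omega\to\omega$, with $g\cdot h$ the function $n\mapsto\Phi^{g\oplus h}_{g(0)}(n)$ ($\Phi_e$ the $e$-th Turing functional, $(g\oplus h)(2n)=g(n)$, $(g\oplus h)(2n+1)=h(n)$), defined if and only if this function is total. *)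

theory Defs
  imports Main "HOL-Library.Nat_Bijection"
begin

text \<open>Index e is decoded by
  e mod 9 (constructor) and e div 9 (sub-indices, split by prod_decode
  for binary constructors).
  0: zero;  1: successor;  2: first projection;  3: second projection;
  4: oracle query;  5: composition (apply b, then a);
  6: pairing x -> <a x, b x>;  7: primitive recursion on <x,k>;
  8: unbounded search (mu operator) over <x,k>.
  phi_rel Or e x y  means  Phi_e^Or(x) converges with output y.\<close>

definition pfst :: "nat \<Rightarrow> nat" where "pfst x = fst (prod_decode x)"
definition psnd :: "nat \<Rightarrow> nat" where "psnd x = snd (prod_decode x)"

inductive phi_rel :: "(nat \<Rightarrow> nat) \<Rightarrow> nat \<Rightarrow> nat \<Rightarrow> nat \<Rightarrow> bool"
  for Or :: "nat \<Rightarrow> nat" where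
  zero: "e mod 9 = 0 \<Longrightarrow> phi_rel Or e x 0"
| succ: "e mod 9 = 1 \<Longrightarrow> phi_rel Or e x (Suc x)"
| proj1: "e mod 9 = 2 \<Longrightarrow> phi_rel Or e x (pfst x)"
| proj2: "e mod 9 = 3 \<Longrightarrow> phi_rel Or e x (psnd x)"
| orc: "e mod 9 = 4 \<Longrightarrow> phi_rel Or e x (Or x)"
| comp: "e mod 9 = 5 \<Longrightarrow> phi_rel Or (psnd (e div 9)) x z \<Longrightarrow>
         phi_rel Or (pfst (e div 9)) z y \<Longrightarrow> phi_rel Or e x y"
| pair: "e mod 9 = 6 \<Longrightarrow> phi_rel Or (pfst (e div 9)) x y1 \<Longrightarrow>
         phi_rel Or (psnd (e div 9)) x y2 \<Longrightarrow> phi_rel Or e x (prod_encode (y1, y2))"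
| prec0: "e mod 9 = 7 \<Longrightarrow> phi_rel Or (pfst (e div 9)) x y \<Longrightarrow>
         phi_rel Or e (prod_encode (x, 0)) y"
| precS: "e mod 9 = 7 \<Longrightarrow> phi_rel Or e (prod_encode (x, k)) z \<Longrightarrow>
         phi_rel Or (psnd (e div 9)) (prod_encode (x, prod_encode (k, z))) y \<Longrightarrow>
         phi_rel Or e (prod_encode (x, Suc k)) y"
| mu: "e mod 9 = 8 \<Longrightarrow> phi_rel Or (e div 9) (prod_encode (x, k)) 0 \<Longrightarrow>
         (\<forall>j<k. \<exists>v. 0 < v \<and> phi_rel Or (e div 9) (prod_encode (x, j)) v) \<Longrightarrow>
         phi_rel Or e x k"

definition Phi :: "nat \<Rightarrow> (nat \<Rightarrow> nat) \<Rightarrow> nat \<Rightarrow> nat option" where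
  "Phi e Or x = (if \<exists>y. phi_rel Or e x y then Some (THE y. phi_rel Or e x y) else None)"

definition chi :: "nat set \<Rightarrow> nat \<Rightarrow> nat" where
  "chi Z n = (if n \<in> Z then 1 else 0)"

definition computable_in :: "nat set \<Rightarrow> (nat \<Rightarrow> nat) \<Rightarrow> bool" where
  "computable_in Z g \<longleftrightarrow> (\<exists>e. \<forall>n. Phi e (chi Z) n = Some (g n))"

definition turing_le :: "nat set \<Rightarrow> nat set \<Rightarrow> bool" where
  "turing_le X Y \<longleftrightarrow> computable_in Y (chi X)"

definition join :: "(nat \<Rightarrow> nat) \<Rightarrow> (nat \<Rightarrow> nat) \<Rightarrow> nat \<Rightarrow> nat" where
  "join g h n = (if even n then g (n div 2) else h (n div 2))"

definition K2_carrier :: "nat set \<Rightarrow> (nat \<Rightarrow> nat) set" where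
  "K2_carrier Z = {g. computable_in Z g}"

definition K2_app :: "(nat \<Rightarrow> nat) \<Rightarrow> (nat \<Rightarrow> nat) \<Rightarrow> (nat \<Rightarrow> nat) option" where
  "K2_app g h = (if \<forall>n. Phi (g 0) (join g h) n \<noteq> None
                 then Some (\<lambda>n. the (Phi (g 0) (join g h) n)) else None)"

definition pca_embedding ::
  "'a set \<Rightarrow> ('a \<Rightarrow> 'a \<Rightarrow> 'a option) \<Rightarrow> 'b set \<Rightarrow> ('b \<Rightarrow> 'b \<Rightarrow> 'b option) \<Rightarrow> ('a \<Rightarrow> 'b) \<Rightarrow> bool"
where
  "pca_embedding A appA B appB f \<longleftrightarrow>
     f ` A \<subseteq> B \<and> inj_on f A \<and>
     (\<forall>a\<in>A. \<forall>b\<in>A. \<forall>c. appA a b = Some c \<longrightarrow> appB (f a) (f b) = Some (f c))"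

end

theory Submission
  imports Defs
begin


lemma pfst_pe[simp]: "pfst (prod_encode (a,b)) = a" by (simp add: pfst_def)
lemma psnd_pe[simp]: "psnd (prod_encode (a,b)) = b" by (simp add: psnd_def)
lemma pe_split[simp]: "prod_encode (pfst x, psnd x) = x" by (simp add: pfst_def psnd_def)

lemma phi_det: "phi_rel Or e x y \<Longrightarrow> phi_rel Or e x y' \<Longrightarrow> y' = y"
proof (induction arbitrary: y' rule: phi_rel.induct)
  case (zero e x) from zero.prems zero.hyps show ?case by (cases rule: phi_rel.cases) simp_all
next
  case (succ e x) from succ.prems succ.hyps show ?case by (cases rule: phi_rel.cases) simp_all
next
  case (proj1 e x) from proj1.prems proj1.hyps show ?case by (cases rule: phi_rel.cases) simp_all
next
  case (proj2 e x) from proj2.prems proj2.hyps show ?case by (cases rule: phi_rel.cases) simp_all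
next
  case (orc e x) from orc.prems orc.hyps show ?case by (cases rule: phi_rel.cases) simp_all
next
  case (comp e x z y) from comp.prems comp.hyps(1) show ?case
  proof (cases rule: phi_rel.cases)
    case (comp z') then show ?thesis using comp.IH by metis
  qed simp_all
next
  case (pair e x y1 y2) from pair.prems pair.hyps(1) show ?case
  proof (cases rule: phi_rel.cases)
    case (pair a b) then show ?thesis using pair.IH by metis
  qed simp_all
next
  case (prec0 e x y) from prec0.prems prec0.hyps(1) show ?case
  proof (cases rule: phi_rel.cases)
    case (prec0 x' ) then show ?thesis using prec0.IH by simp
  qed simp_all
next
  case (precS e x k z y) from precS.prems precS.hyps(1) show ?case
  proof (cases rule: phi_rel.cases)
    case (precS x' k' z') then show ?thesis using precS.IH by (metis prod_encode_eq prod.inject nat.inject)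
  qed simp_all
next
  case (mu e x k)
  from mu.prems mu.hyps(1) show ?case
  proof (cases rule: phi_rel.cases)
    case mu2: mu
    show ?thesis
    proof (rule ccontr)
      assume ne: "y' \<noteq> k"
      show False
      proof (cases "k < y'")
        case True
        with mu2(3) obtain v where "0 < v" "phi_rel Or (e div 9) (prod_encode (x, k)) v" by auto
        with mu.IH(1) show False by auto
      next
        case False
        with ne have "y' < k" by auto
        with mu.IH(2) obtain v where "0 < v" "\<And>w. phi_rel Or (e div 9) (prod_encode (x, y')) w \<Longrightarrow> w = v" by auto
        with mu2(2) show False by auto
      qed
    qed
  qed simp_all
qed


definition cmp :: "(nat \<Rightarrow> nat) set \<Rightarrow> ((nat \<Rightarrow> nat) \<Rightarrow> nat \<Rightarrow> nat) \<Rightarrow> bool" where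
  "cmp S g \<longleftrightarrow> (\<exists>e. \<forall>Or\<in>S. \<forall>x. phi_rel Or e x (g Or x))"

lemma cd_mod[simp]: "c < 9 \<Longrightarrow> (c + 9 * q) mod 9 = (c::nat)" by simp
lemma cd_div[simp]: "c < 9 \<Longrightarrow> (c + 9 * q) div 9 = (q::nat)" by simp

lemma cmp_zero: "cmp S (\<lambda>Or x. 0)"
  unfolding cmp_def by (rule exI[of _ 0]) (auto intro: phi_rel.zero)
lemma cmp_succ0: "cmp S (\<lambda>Or x. Suc x)"
  unfolding cmp_def by (rule exI[of _ 1]) (auto intro: phi_rel.succ)
lemma cmp_pfst0: "cmp S (\<lambda>Or x. pfst x)"
  unfolding cmp_def by (rule exI[of _ 2]) (auto intro: phi_rel.proj1)
lemma cmp_psnd0: "cmp S (\<lambda>Or x. psnd x)"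
  unfolding cmp_def by (rule exI[of _ 3]) (auto intro: phi_rel.proj2)
lemma cmp_orc0: "cmp S (\<lambda>Or x. Or x)"
  unfolding cmp_def by (rule exI[of _ 4]) (auto intro: phi_rel.orc)

lemma cmp_comp: assumes "cmp S f" "cmp S g" shows "cmp S (\<lambda>Or x. f Or (g Or x))"
proof -
  obtain a where a: "\<And>Or x. Or \<in> S \<Longrightarrow> phi_rel Or a x (f Or x)" using assms(1) unfolding cmp_def by blast
  obtain b where b: "\<And>Or x. Or \<in> S \<Longrightarrow> phi_rel Or b x (g Or x)" using assms(2) unfolding cmp_def by blast
  have "phi_rel Or (5 + 9 * prod_encode (a, b)) x (f Or (g Or x))" if "Or \<in> S" for Or x
    by (rule phi_rel.comp[where z="g Or x"]) (simp_all add: a b that)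
  then show ?thesis unfolding cmp_def by blast
qed

lemma cmp_pair: assumes "cmp S f" "cmp S g" shows "cmp S (\<lambda>Or x. prod_encode (f Or x, g Or x))"
proof -
  obtain a where a: "\<And>Or x. Or \<in> S \<Longrightarrow> phi_rel Or a x (f Or x)" using assms(1) unfolding cmp_def by blast
  obtain b where b: "\<And>Or x. Or \<in> S \<Longrightarrow> phi_rel Or b x (g Or x)" using assms(2) unfolding cmp_def by blast
  have "phi_rel Or (6 + 9 * prod_encode (a, b)) x (prod_encode (f Or x, g Or x))" if "Or \<in> S" for Or x
    by (rule phi_rel.pair) (simp_all add: a b that)
  then show ?thesis unfolding cmp_def by blast
qed

lemma cmp_prec0:
  assumes "cmp S b" "cmp S (\<lambda>Or z. s Or (pfst z) (pfst (psnd z)) (psnd (psnd z)))"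
  shows "cmp S (\<lambda>Or z. rec_nat (b Or (pfst z)) (\<lambda>k r. s Or (pfst z) k r) (psnd z))"
proof -
  obtain a where a: "\<And>Or x. Or \<in> S \<Longrightarrow> phi_rel Or a x (b Or x)" using assms(1) unfolding cmp_def by blast
  obtain c where c: "\<And>Or z. Or \<in> S \<Longrightarrow> phi_rel Or c z (s Or (pfst z) (pfst (psnd z)) (psnd (psnd z)))"
    using assms(2) unfolding cmp_def by blast
  define e where "e = 7 + 9 * prod_encode (a, c)"
  have em: "e mod 9 = 7" and ed: "e div 9 = prod_encode (a, c)" unfolding e_def by simp_all
  have main: "phi_rel Or e (prod_encode (x, k)) (rec_nat (b Or x) (\<lambda>k r. s Or x k r) k)" if "Or \<in> S" for Or x k
  proof (induction k)
    case 0 show ?case by (simp, rule phi_rel.prec0) (simp_all add: em ed a that)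
  next
    case (Suc k)
    have "phi_rel Or c (prod_encode (x, prod_encode (k, rec_nat (b Or x) (\<lambda>k r. s Or x k r) k)))
       (s Or x k (rec_nat (b Or x) (\<lambda>k r. s Or x k r) k))"
      using c[OF that, of "prod_encode (x, prod_encode (k, rec_nat (b Or x) (\<lambda>k r. s Or x k r) k))"] by simp
    then show ?case by (simp, intro phi_rel.precS[OF em Suc]) (simp add: ed)
  qed
  have "phi_rel Or e z (rec_nat (b Or (pfst z)) (\<lambda>k r. s Or (pfst z) k r) (psnd z))" if "Or \<in> S" for Or z
    using main[OF that, of "pfst z" "psnd z"] by simp
  then show ?thesis unfolding cmp_def by blast
qed

lemma cmp_mu0:
  assumes "cmp S h" "\<And>Or x. Or \<in> S \<Longrightarrow> \<exists>k. h Or (prod_encode (x, k)) = 0"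
  shows "cmp S (\<lambda>Or x. LEAST k. h Or (prod_encode (x, k)) = 0)"
proof -
  obtain a where a: "\<And>Or x. Or \<in> S \<Longrightarrow> phi_rel Or a x (h Or x)" using assms(1) unfolding cmp_def by blast
  have "phi_rel Or (8 + 9 * a) x (LEAST k. h Or (prod_encode (x, k)) = 0)" if OS: "Or \<in> S" for Or x
  proof -
    let ?k = "LEAST k. h Or (prod_encode (x, k)) = 0"
    obtain k0 where "h Or (prod_encode (x, k0)) = 0" using assms(2)[OF OS] by blast
    then have z: "h Or (prod_encode (x, ?k)) = 0" by (rule LeastI)
    have lt: "\<forall>j<?k. \<exists>v. 0 < v \<and> phi_rel Or a (prod_encode (x, j)) v"
    proof (intro allI impI)
      fix j assume "j < ?k"
      then have "h Or (prod_encode (x, j)) \<noteq> 0" by (rule not_less_Least)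
      then show "\<exists>v. 0 < v \<and> phi_rel Or a (prod_encode (x, j)) v" using a[OF OS] by blast
    qed
    have z2: "phi_rel Or a (prod_encode (x, ?k)) 0" using a[OF OS, of "prod_encode (x, ?k)"] z by simp
    have d: "(8 + 9*a) div 9 = a" by simp
    show ?thesis apply (rule phi_rel.mu) apply simp unfolding d by (rule z2) (rule lt)
  qed
  then show ?thesis unfolding cmp_def by blast
qed

lemma cmp_ext: "cmp S f \<Longrightarrow> (\<And>Or x. Or \<in> S \<Longrightarrow> f Or x = g Or x) \<Longrightarrow> cmp S g"
  unfolding cmp_def by auto


lemma cmp_const: "cmp S (\<lambda>Or x. c)"
proof (induction c)
  case 0 then show ?case by (rule cmp_zero)
next
  case (Suc c) then show ?case using cmp_comp[OF cmp_succ0 Suc] by simp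
qed

lemma cmp_Suc: "cmp S g \<Longrightarrow> cmp S (\<lambda>Or x. Suc (g Or x))"
  using cmp_comp[OF cmp_succ0] by simp
lemma cmp_pfst: "cmp S g \<Longrightarrow> cmp S (\<lambda>Or x. pfst (g Or x))"
  using cmp_comp[OF cmp_pfst0] by simp
lemma cmp_psnd: "cmp S g \<Longrightarrow> cmp S (\<lambda>Or x. psnd (g Or x))"
  using cmp_comp[OF cmp_psnd0] by simp
lemma cmp_Or: "cmp S g \<Longrightarrow> cmp S (\<lambda>Or x. Or (g Or x))"
  using cmp_comp[OF cmp_orc0] by simp
lemmas cmp_pe = cmp_pair

lemma cmp_id: "cmp S (\<lambda>Or x. x)"
proof -
  have "cmp S (\<lambda>Or z. rec_nat ((\<lambda>Or x. 0) Or (pfst z)) (\<lambda>k r. (\<lambda>Or x k r. k) Or (pfst z) k r) (psnd z))"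
    by (rule cmp_prec0) (simp_all add: cmp_zero cmp_pfst cmp_psnd0)
  then have "cmp S (\<lambda>Or z. rec_nat (0::nat) (\<lambda>k r. k) (psnd z))" by simp
  from cmp_comp[OF this cmp_pair[OF cmp_zero cmp_succ0]] show ?thesis by simp
qed

lemma cmp_bin: "cmp S (\<lambda>Or z. F Or (pfst z) (psnd z)) \<Longrightarrow> cmp S g \<Longrightarrow> cmp S h \<Longrightarrow>
  cmp S (\<lambda>Or x. F Or (g Or x) (h Or x))"
  using cmp_comp[OF _ cmp_pair] by fastforce

lemma rec_add: "rec_nat x (\<lambda>k r. Suc r) y = x + (y::nat)" by (induction y) auto
lemma rec_pred: "rec_nat 0 (\<lambda>k r. k) y = y - (1::nat)" by (cases y) auto
lemma rec_sub: "rec_nat x (\<lambda>k r. r - Suc 0) y = x - (y::nat)" by (induction y) auto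
lemma rec_mult: "rec_nat 0 (\<lambda>k r. r + x) y = x * (y::nat)" by (induction y) auto
lemma rec_iter: "rec_nat x (\<lambda>k r. psnd r) y = (psnd ^^ y) x" by (induction y) auto

lemma cmp_add0: "cmp S (\<lambda>Or z. pfst z + psnd z)"
proof -
  have "cmp S (\<lambda>Or z. rec_nat ((\<lambda>Or x. x) Or (pfst z)) (\<lambda>k r. (\<lambda>Or x k r. Suc r) Or (pfst z) k r) (psnd z))"
    by (rule cmp_prec0) (simp_all add: cmp_id cmp_Suc cmp_psnd0 cmp_psnd)
  then show ?thesis by (simp add: rec_add)
qed
lemma cmp_add: "cmp S g \<Longrightarrow> cmp S h \<Longrightarrow> cmp S (\<lambda>Or x. g Or x + h Or x)"
  by (rule cmp_bin[OF cmp_add0])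

lemma cmp_pred0: "cmp S (\<lambda>Or x. x - 1)"
proof -
  have "cmp S (\<lambda>Or z. rec_nat ((\<lambda>Or x. 0) Or (pfst z)) (\<lambda>k r. (\<lambda>Or x k r. k) Or (pfst z) k r) (psnd z))"
    by (rule cmp_prec0) (simp_all add: cmp_zero cmp_pfst cmp_psnd0)
  then have "cmp S (\<lambda>Or z. rec_nat (0::nat) (\<lambda>k r. k) (psnd z))" by simp
  from cmp_comp[OF this cmp_pair[OF cmp_zero cmp_id]] show ?thesis by (simp add: rec_pred)
qed

lemma cmp_pred: "cmp S g \<Longrightarrow> cmp S (\<lambda>Or x. g Or x - 1)"
  using cmp_comp[OF cmp_pred0] by simp

lemma cmp_sub0: "cmp S (\<lambda>Or z. pfst z - psnd z)"
proof -
  have "cmp S (\<lambda>Or z. rec_nat ((\<lambda>Or x. x) Or (pfst z)) (\<lambda>k r. (\<lambda>Or x k r. r - 1) Or (pfst z) k r) (psnd z))"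
    by (rule cmp_prec0) (simp add: cmp_id, intro cmp_pred cmp_psnd cmp_id)
  then show ?thesis by (simp add: rec_sub)
qed
lemma cmp_sub: "cmp S g \<Longrightarrow> cmp S h \<Longrightarrow> cmp S (\<lambda>Or x. g Or x - h Or x)"
  by (rule cmp_bin[OF cmp_sub0])

lemma cmp_mult0: "cmp S (\<lambda>Or z. pfst z * psnd z)"
proof -
  have "cmp S (\<lambda>Or z. rec_nat ((\<lambda>Or x. 0) Or (pfst z)) (\<lambda>k r. (\<lambda>Or x k r. r + x) Or (pfst z) k r) (psnd z))"
    by (rule cmp_prec0) (simp_all add: cmp_zero cmp_add cmp_psnd0 cmp_psnd cmp_pfst0)
  then show ?thesis by (simp add: rec_mult)
qed
lemma cmp_mult: "cmp S g \<Longrightarrow> cmp S h \<Longrightarrow> cmp S (\<lambda>Or x. g Or x * h Or x)"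
  by (rule cmp_bin[OF cmp_mult0])

lemma cmp_iter0: "cmp S (\<lambda>Or z. (psnd ^^ (psnd z)) (pfst z))"
proof -
  have "cmp S (\<lambda>Or z. rec_nat ((\<lambda>Or x. x) Or (pfst z)) (\<lambda>k r. (\<lambda>Or x k r. psnd r) Or (pfst z) k r) (psnd z))"
    by (rule cmp_prec0) (simp_all add: cmp_id cmp_psnd0 cmp_psnd)
  then show ?thesis by (simp add: rec_iter)
qed
lemma cmp_iter: "cmp S g \<Longrightarrow> cmp S h \<Longrightarrow> cmp S (\<lambda>Or x. (psnd ^^ (g Or x)) (h Or x))"
  using cmp_bin[OF cmp_iter0, of S h g] by simp

definition cmpP :: "(nat \<Rightarrow> nat) set \<Rightarrow> ((nat \<Rightarrow> nat) \<Rightarrow> nat \<Rightarrow> bool) \<Rightarrow> bool" where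
  "cmpP S P \<longleftrightarrow> cmp S (\<lambda>Or x. if P Or x then 1 else 0)"

lemma cmpP_eq: assumes "cmp S g" "cmp S h" shows "cmpP S (\<lambda>Or x. g Or x = h Or x)"
  unfolding cmpP_def
proof (rule cmp_ext)
  show "cmp S (\<lambda>Or x. 1 - ((g Or x - h Or x) + (h Or x - g Or x)))" by (intro cmp_sub cmp_add cmp_const assms)
qed auto
lemma cmpP_less: assumes "cmp S g" "cmp S h" shows "cmpP S (\<lambda>Or x. g Or x < h Or x)"
  unfolding cmpP_def
proof (rule cmp_ext)
  show "cmp S (\<lambda>Or x. 1 - (1 - (h Or x - g Or x)))" by (intro cmp_sub cmp_add cmp_const assms)
qed auto
lemma cmpP_le: assumes "cmp S g" "cmp S h" shows "cmpP S (\<lambda>Or x. g Or x \<le> h Or x)"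
  unfolding cmpP_def
proof (rule cmp_ext)
  show "cmp S (\<lambda>Or x. 1 - (g Or x - h Or x))" by (intro cmp_sub cmp_add cmp_const assms)
qed auto
lemma cmpP_and: assumes "cmpP S P" "cmpP S Q" shows "cmpP S (\<lambda>Or x. P Or x \<and> Q Or x)"
  using assms unfolding cmpP_def
proof -
  assume a: "cmp S (\<lambda>Or x. if P Or x then 1 else 0)" "cmp S (\<lambda>Or x. if Q Or x then 1 else 0)"
  show "cmp S (\<lambda>Or x. if P Or x \<and> Q Or x then 1 else 0)"
    by (rule cmp_ext[OF cmp_mult[OF a]]) auto
qed
lemma cmpP_not: assumes "cmpP S P" shows "cmpP S (\<lambda>Or x. \<not> P Or x)"
  using assms unfolding cmpP_def
proof -
  assume a: "cmp S (\<lambda>Or x. if P Or x then 1 else 0)"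
  show "cmp S (\<lambda>Or x. if \<not> P Or x then 1 else 0)"
    by (rule cmp_ext[OF cmp_sub[OF cmp_const[of S 1] a]]) auto
qed
lemma cmpP_or: "cmpP S P \<Longrightarrow> cmpP S Q \<Longrightarrow> cmpP S (\<lambda>Or x. P Or x \<or> Q Or x)"
proof -
  assume "cmpP S P" "cmpP S Q"
  from cmpP_not[OF cmpP_and[OF cmpP_not[OF this(1)] cmpP_not[OF this(2)]]]
  show ?thesis by simp
qed
lemma cmpP_True: "cmpP S (\<lambda>Or x. True)" unfolding cmpP_def by (simp add: cmp_const)
lemma cmpP_False: "cmpP S (\<lambda>Or x. False)" unfolding cmpP_def by (simp add: cmp_const)
lemma cmp_if: assumes "cmpP S P" "cmp S g" "cmp S h" shows "cmp S (\<lambda>Or x. if P Or x then g Or x else h Or x)"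
  using assms(1) unfolding cmpP_def
proof -
  assume a: "cmp S (\<lambda>Or x. if P Or x then 1 else 0)"
  show ?thesis
    by (rule cmp_ext[OF cmp_add[OF cmp_mult[OF a assms(2)] cmp_mult[OF cmp_sub[OF cmp_const[of S 1] a] assms(3)]]]) auto
qed

lemma cmp_mu:
  assumes "cmp S (\<lambda>Or z. h Or (pfst z) (psnd z))" "\<And>Or x. Or \<in> S \<Longrightarrow> \<exists>k. h Or x k = 0" "cmp S g"
  shows "cmp S (\<lambda>Or x. LEAST k. h Or (g Or x) k = 0)"
proof -
  have "cmp S (\<lambda>Or x. LEAST k. h Or (pfst (prod_encode (x, k))) (psnd (prod_encode (x, k))) = 0)"
    by (rule cmp_mu0) (use assms in simp_all)
  from cmp_comp[OF this assms(3)] show ?thesis by simp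
qed

lemma least_div: "0 < (y::nat) \<Longrightarrow> (LEAST q. x < (q + 1) * y) = x div y"
proof (rule Least_equality)
  assume "0 < y"
  have "x = y * (x div y) + x mod y" by simp
  moreover have "(x div y + 1) * y = y * (x div y) + y" by (simp add: algebra_simps)
  ultimately show "x < (x div y + 1) * y" using mod_less_divisor[OF \<open>0 < y\<close>, of x]
    by linarith
  fix q assume "x < (q + 1) * y"
  then show "x div y \<le> q" using less_mult_imp_div_less[of x "q+1" y] by simp
qed

lemma cmp_div0: "cmp S (\<lambda>Or z. pfst z div psnd z)"
proof -
  let ?h = "\<lambda>Or z q. if pfst z < (q + 1) * psnd z \<or> psnd z = 0 then 0 else (1::nat)"
  have c: "cmp S (\<lambda>Or w. ?h Or (pfst w) (psnd w))"
    by (intro cmp_if cmpP_or cmpP_less cmpP_eq cmp_mult cmp_add cmp_pfst cmp_psnd cmp_id cmp_const)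
  have e: "\<exists>k. ?h Or x k = 0" for Or x
  proof (cases "psnd x = 0")
    case False
    then have "pfst x * 1 \<le> pfst x * psnd x" by (intro mult_le_mono2) simp
    moreover have "(pfst x + 1) * psnd x = pfst x * psnd x + psnd x" by (simp add: algebra_simps)
    ultimately have "pfst x + 1 \<le> (pfst x + 1) * psnd x" using False by linarith
    then have "?h Or x (pfst x) = 0" by simp
    then show ?thesis by blast
  qed auto
  have "cmp S (\<lambda>Or x. LEAST k. ?h Or ((\<lambda>Or x. x) Or x) k = 0)"
    by (rule cmp_mu[OF c e cmp_id])
  then show ?thesis
  proof (rule cmp_ext)
    fix Or x
    show "(LEAST k. ?h Or ((\<lambda>Or x. x) Or x) k = 0) = pfst x div psnd x"
    proof (cases "psnd x = 0")
      case True then show ?thesis by simp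
    next
      case False
      then have "(LEAST k. ?h Or x k = 0) = (LEAST q. pfst x < (q + 1) * psnd x)" by simp
      then show ?thesis using least_div[of "psnd x" "pfst x"] False by simp
    qed
  qed
qed
lemma cmp_div: "cmp S g \<Longrightarrow> cmp S h \<Longrightarrow> cmp S (\<lambda>Or x. g Or x div h Or x)"
  by (rule cmp_bin[OF cmp_div0])
lemma cmp_mod: assumes "cmp S g" "cmp S h" shows "cmp S (\<lambda>Or x. g Or x mod h Or x)"
proof (rule cmp_ext)
  show "cmp S (\<lambda>Or x. g Or x - g Or x div h Or x * h Or x)" by (intro cmp_sub cmp_mult cmp_div assms)
qed (simp add: minus_div_mult_eq_mod)

lemma cmpP_even: "cmp S g \<Longrightarrow> cmpP S (\<lambda>Or x. even (g Or x))"
proof -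
  assume "cmp S g"
  from cmpP_eq[OF cmp_mod[OF this cmp_const] cmp_const, of 2 0] show ?thesis by (simp add: even_iff_mod_2_eq_zero)
qed

lemmas cmp_intros = cmp_if cmpP_and cmpP_or cmpP_not cmpP_eq cmpP_less cmpP_le cmpP_even cmpP_True cmpP_False
  cmp_add cmp_sub cmp_mult cmp_div cmp_mod cmp_iter cmp_pfst cmp_psnd cmp_pe cmp_Suc cmp_Or cmp_id cmp_const


definition mk :: "nat \<Rightarrow> nat \<Rightarrow> nat \<Rightarrow> nat \<Rightarrow> nat" where
  "mk t h s1 s2 = prod_encode (t, prod_encode (h, prod_encode (s1, s2)))"
definition hdr :: "nat \<Rightarrow> nat \<Rightarrow> nat \<Rightarrow> nat \<Rightarrow> nat" where
  "hdr n p x y = prod_encode (n, prod_encode (p, prod_encode (x, y)))"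
definition ctag :: "nat \<Rightarrow> nat" where "ctag c = pfst c"
definition chd :: "nat \<Rightarrow> nat" where "chd c = pfst (psnd c)"
definition cs1 :: "nat \<Rightarrow> nat" where "cs1 c = pfst (psnd (psnd c))"
definition cs2 :: "nat \<Rightarrow> nat" where "cs2 c = psnd (psnd (psnd c))"
definition hN :: "nat \<Rightarrow> nat" where "hN h = pfst h"
definition hP :: "nat \<Rightarrow> nat" where "hP h = pfst (psnd h)"
definition hX :: "nat \<Rightarrow> nat" where "hX h = pfst (psnd (psnd h))"
definition hY :: "nat \<Rightarrow> nat" where "hY h = psnd (psnd (psnd h))"

lemmas acc_defs = ctag_def chd_def cs1_def cs2_def hN_def hP_def hX_def hY_def

lemma acc_mk[simp]: "ctag (mk t h s1 s2) = t" "chd (mk t h s1 s2) = h" "cs1 (mk t h s1 s2) = s1" "cs2 (mk t h s1 s2) = s2"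
  by (simp_all add: mk_def acc_defs)
lemma acc_hd[simp]: "hN (hdr n p x y) = n" "hP (hdr n p x y) = p" "hX (hdr n p x y) = x" "hY (hdr n p x y) = y"
  by (simp_all add: hdr_def acc_defs)
lemma hd_eq[simp]: "hdr n p x y = hdr n' p' x' y' \<longleftrightarrow> n = n' \<and> p = p' \<and> x = x' \<and> y = y'"
  by (simp add: hdr_def)

lemma triangle_ge: "k \<le> triangle k" by (induction k) auto
lemma pe_gt: "0 < t \<Longrightarrow> r < prod_encode (t, r)"
  using triangle_ge[of "t + r"] by (simp add: prod_encode_def)
lemma mk_gt: "0 < t \<Longrightarrow> s1 < mk t h s1 s2" "0 < t \<Longrightarrow> s2 < mk t h s1 s2"
proof -
  assume "0 < t"
  have "s1 \<le> prod_encode (s1, s2)" "s2 \<le> prod_encode (s1, s2)" by (rule le_prod_encode_1, rule le_prod_encode_2)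
  moreover have "prod_encode (s1, s2) \<le> prod_encode (h, prod_encode (s1, s2))" by (rule le_prod_encode_2)
  moreover have "prod_encode (h, prod_encode (s1, s2)) < mk t h s1 s2" unfolding mk_def using pe_gt[OF \<open>0 < t\<close>] .
  ultimately show "s1 < mk t h s1 s2" "s2 < mk t h s1 s2" by linarith+
qed

definition RC :: "(nat \<Rightarrow> bool) \<Rightarrow> nat \<Rightarrow> nat \<Rightarrow> nat \<Rightarrow> nat \<Rightarrow> nat \<Rightarrow> bool" where
  "RC V s n p x y \<longleftrightarrow> V s \<and> 1 \<le> ctag s \<and> ctag s \<le> 10 \<and> chd s = hdr n p x y"
definition MP :: "(nat \<Rightarrow> bool) \<Rightarrow> nat \<Rightarrow> nat \<Rightarrow> nat \<Rightarrow> nat \<Rightarrow> nat \<Rightarrow> bool" where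
  "MP V s n p x y \<longleftrightarrow> V s \<and> ctag s = 11 \<and> chd s = hdr n p x y"

definition Gb :: "(nat \<Rightarrow> nat) \<Rightarrow> (nat \<Rightarrow> nat) \<Rightarrow> nat \<Rightarrow> (nat \<Rightarrow> bool) \<Rightarrow> nat \<Rightarrow> bool" where
"Gb a v0 e V c \<longleftrightarrow> (let t = ctag c; n = hN (chd c); p = hP (chd c); x = hX (chd c); y = hY (chd c);
     s1 = cs1 c; s2 = cs2 c in
  1 \<le> n \<and> s1 < c \<and> s2 < c \<and> 1 \<le> t \<and> t \<le> 11 \<and>
  (t = 1 \<longrightarrow> p mod 9 = 0 \<and> y = 0) \<and>
  (t = 2 \<longrightarrow> p mod 9 = 1 \<and> y = Suc x) \<and>
  (t = 3 \<longrightarrow> p mod 9 = 2 \<and> y = pfst x) \<and>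
  (t = 4 \<longrightarrow> p mod 9 = 3 \<and> y = psnd x) \<and>
  (t = 5 \<longrightarrow> p mod 9 = 4 \<and> (if even x then y = a (x div 2) else if n = 1 then y = v0 (x div 2)
                              else RC V s1 (n - 1) e (x div 2) y)) \<and>
  (t = 6 \<longrightarrow> p mod 9 = 5 \<and> RC V s1 n (psnd (p div 9)) x (hY (chd s1)) \<and> RC V s2 n (pfst (p div 9)) (hY (chd s1)) y) \<and>
  (t = 7 \<longrightarrow> p mod 9 = 6 \<and> RC V s1 n (pfst (p div 9)) x (hY (chd s1)) \<and> RC V s2 n (psnd (p div 9)) x (hY (chd s2))
            \<and> y = prod_encode (hY (chd s1), hY (chd s2))) \<and>
  (t = 8 \<longrightarrow> p mod 9 = 7 \<and> psnd x = 0 \<and> RC V s1 n (pfst (p div 9)) (pfst x) y) \<and>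
  (t = 9 \<longrightarrow> p mod 9 = 7 \<and> 0 < psnd x \<and> RC V s1 n p (prod_encode (pfst x, psnd x - 1)) (hY (chd s1))
            \<and> RC V s2 n (psnd (p div 9)) (prod_encode (pfst x, prod_encode (psnd x - 1, hY (chd s1)))) y) \<and>
  (t = 10 \<longrightarrow> p mod 9 = 8 \<and> RC V s1 n (p div 9) (prod_encode (x, y)) 0 \<and> MP V s2 n (p div 9) x y) \<and>
  (t = 11 \<longrightarrow> y = 0 \<or> (MP V s1 n p x (y - 1) \<and> RC V s2 n p (prod_encode (x, y - 1)) (hY (chd s2)) \<and> 0 < hY (chd s2))))"

definition look :: "nat \<Rightarrow> nat \<Rightarrow> nat \<Rightarrow> bool" where
  "look h c s \<longleftrightarrow> pfst ((psnd ^^ (c - 1 - s)) h) = 1"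

primrec hist :: "(nat \<Rightarrow> nat) \<Rightarrow> (nat \<Rightarrow> nat) \<Rightarrow> nat \<Rightarrow> nat \<Rightarrow> nat" where
  "hist a v0 e 0 = 0"
| "hist a v0 e (Suc c) = prod_encode (if Gb a v0 e (look (hist a v0 e c) c) c then 1 else 0, hist a v0 e c)"

definition Vc :: "(nat \<Rightarrow> nat) \<Rightarrow> (nat \<Rightarrow> nat) \<Rightarrow> nat \<Rightarrow> nat \<Rightarrow> bool" where
  "Vc a v0 e c \<longleftrightarrow> Gb a v0 e (look (hist a v0 e c) c) c"

lemma iter_hist: "k \<le> c \<Longrightarrow> (psnd ^^ k) (hist a v0 e c) = hist a v0 e (c - k)"
proof (induction k)
  case 0 then show ?case by simp
next
  case (Suc k)
  then obtain j where j: "c - k = Suc j" by (metis Suc_diff_le diff_Suc_Suc diff_zero le_SucE less_Suc_eq_le not_less_eq_eq Suc_le_lessD zero_less_diff)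
  then have "c - Suc k = j" by simp
  with Suc j show ?case by simp
qed

lemma look_hist: "s < c \<Longrightarrow> look (hist a v0 e c) c s = Vc a v0 e s"
proof -
  assume "s < c"
  then have "(psnd ^^ (c - 1 - s)) (hist a v0 e c) = hist a v0 e (Suc s)"
    by (subst iter_hist) (simp_all add: Suc_diff_Suc)
  then have "look (hist a v0 e c) c s \<longleftrightarrow> pfst (hist a v0 e (Suc s)) = 1" by (simp only: look_def)
  then show ?thesis by (simp add: Vc_def)
qed

lemma Gb_cong:
  assumes "cs1 c < c \<Longrightarrow> V1 (cs1 c) = V2 (cs1 c)" "cs2 c < c \<Longrightarrow> V1 (cs2 c) = V2 (cs2 c)"
  shows "Gb a v0 e V1 c = Gb a v0 e V2 c"
proof (cases "cs1 c < c \<and> cs2 c < c")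
  case True
  then have e1: "V1 (cs1 c) = V2 (cs1 c)" and e2: "V1 (cs2 c) = V2 (cs2 c)" using assms by auto
  show ?thesis unfolding Gb_def Let_def RC_def MP_def e1 e2 ..
next
  case False
  then show ?thesis unfolding Gb_def Let_def by auto
qed

lemma V_unfold: "Vc a v0 e c \<longleftrightarrow> Gb a v0 e (Vc a v0 e) c"
  unfolding Vc_def[of a v0 e c] by (rule Gb_cong) (simp_all add: look_hist)


locale itr =
  fixes a :: "nat \<Rightarrow> nat" and u :: "nat \<Rightarrow> nat \<Rightarrow> nat"
  assumes step: "\<And>n m. phi_rel (join a (u n)) (a 0) m (u (Suc n) m)"
begin

abbreviation V where "V \<equiv> Vc a (u 0) (a 0)"
definition lvl :: "nat \<Rightarrow> nat \<Rightarrow> nat" where "lvl n = join a (u (n - 1))"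

definition Sem :: "nat \<Rightarrow> bool" where
  "Sem c \<longleftrightarrow> (1 \<le> ctag c \<and> ctag c \<le> 10 \<longrightarrow> phi_rel (lvl (hN (chd c))) (hP (chd c)) (hX (chd c)) (hY (chd c))) \<and>
     (ctag c = 11 \<longrightarrow> (\<forall>j<hY (chd c). \<exists>v>0. phi_rel (lvl (hN (chd c))) (hP (chd c)) (prod_encode (hX (chd c), j)) v))"

lemma RC_sem: "RC V s n p x y \<Longrightarrow> (V s \<Longrightarrow> Sem s) \<Longrightarrow> phi_rel (lvl n) p x y"
  unfolding RC_def Sem_def by auto
lemma MP_sem: "MP V s n p x k \<Longrightarrow> (V s \<Longrightarrow> Sem s) \<Longrightarrow> \<forall>j<k. \<exists>v>0. phi_rel (lvl n) p (prod_encode (x, j)) v"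
  unfolding MP_def Sem_def by auto

lemma sound: "V c \<Longrightarrow> Sem c"
proof (induction c rule: less_induct)
  case (less c)
  let ?t = "ctag c" and ?n = "hN (chd c)" and ?p = "hP (chd c)" and ?x = "hX (chd c)" and ?y = "hY (chd c)"
    and ?s1 = "cs1 c" and ?s2 = "cs2 c"
  have G: "Gb a (u 0) (a 0) V c" using less.prems V_unfold by blast
  have basic: "1 \<le> ?n" "?s1 < c" "?s2 < c" "1 \<le> ?t" "?t \<le> 11" using G unfolding Gb_def Let_def by auto
  have I1: "V ?s1 \<Longrightarrow> Sem ?s1" and I2: "V ?s2 \<Longrightarrow> Sem ?s2" using less.IH basic by auto
  have c1: "phi_rel (lvl ?n) ?p ?x ?y" if "?t = 1"
  proof -
    have "?p mod 9 = 0" "?y = 0" using G that unfolding Gb_def Let_def by auto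
    then show ?thesis by (simp add: phi_rel.zero)
  qed
  have c2: "phi_rel (lvl ?n) ?p ?x ?y" if "?t = 2"
  proof -
    have "?p mod 9 = 1" "?y = Suc ?x" using G that unfolding Gb_def Let_def by auto
    then show ?thesis by (simp add: phi_rel.succ)
  qed
  have c3: "phi_rel (lvl ?n) ?p ?x ?y" if "?t = 3"
  proof -
    have "?p mod 9 = 2" "?y = pfst ?x" using G that unfolding Gb_def Let_def by auto
    then show ?thesis by (simp add: phi_rel.proj1)
  qed
  have c4: "phi_rel (lvl ?n) ?p ?x ?y" if "?t = 4"
  proof -
    have "?p mod 9 = 3" "?y = psnd ?x" using G that unfolding Gb_def Let_def by auto
    then show ?thesis by (simp add: phi_rel.proj2)
  qed
  have c5: "phi_rel (lvl ?n) ?p ?x ?y" if "?t = 5"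
  proof -
    have m: "?p mod 9 = 4" and r: "if even ?x then ?y = a (?x div 2) else if ?n = 1 then ?y = u 0 (?x div 2)
                              else RC V ?s1 (?n - 1) (a 0) (?x div 2) ?y"
      using G that unfolding Gb_def Let_def by auto
    have "?y = lvl ?n ?x"
    proof (cases "even ?x")
      case True then show ?thesis using r by (simp add: lvl_def join_def)
    next
      case odd: False
      show ?thesis
      proof (cases "?n = 1")
        case True then show ?thesis using r odd by (simp add: lvl_def join_def)
      next
        case False
        then have "RC V ?s1 (?n - 1) (a 0) (?x div 2) ?y" using r odd by simp
        then have ph: "phi_rel (lvl (?n - 1)) (a 0) (?x div 2) ?y" using RC_sem I1 by blast
        obtain k where k: "?n = Suc (Suc k)" using False basic(1)
          by (metis One_nat_def Suc_le_D le_SucE not_less_eq_eq)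
        have "lvl (?n - 1) = join a (u k)" using k by (simp add: lvl_def)
        with ph step[of k "?x div 2"] phi_det have "?y = u (Suc k) (?x div 2)" by metis
        then show ?thesis using odd k by (simp add: lvl_def join_def)
      qed
    qed
    then show ?thesis using m by (simp add: phi_rel.orc)
  qed
  have c6: "phi_rel (lvl ?n) ?p ?x ?y" if "?t = 6"
  proof -
    have m: "?p mod 9 = 5" and r1: "RC V ?s1 ?n (psnd (?p div 9)) ?x (hY (chd ?s1))"
      and r2: "RC V ?s2 ?n (pfst (?p div 9)) (hY (chd ?s1)) ?y"
      using G that unfolding Gb_def Let_def by auto
    show ?thesis by (rule phi_rel.comp[OF m RC_sem[OF r1 I1] RC_sem[OF r2 I2]])
  qed
  have c7: "phi_rel (lvl ?n) ?p ?x ?y" if "?t = 7"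
  proof -
    have m: "?p mod 9 = 6" and r1: "RC V ?s1 ?n (pfst (?p div 9)) ?x (hY (chd ?s1))"
      and r2: "RC V ?s2 ?n (psnd (?p div 9)) ?x (hY (chd ?s2))"
      and y: "?y = prod_encode (hY (chd ?s1), hY (chd ?s2))"
      using G that unfolding Gb_def Let_def by auto
    show ?thesis unfolding y by (rule phi_rel.pair[OF m RC_sem[OF r1 I1] RC_sem[OF r2 I2]])
  qed
  have c8: "phi_rel (lvl ?n) ?p ?x ?y" if "?t = 8"
  proof -
    have m: "?p mod 9 = 7" and z: "psnd ?x = 0" and r1: "RC V ?s1 ?n (pfst (?p div 9)) (pfst ?x) ?y"
      using G that unfolding Gb_def Let_def by auto
    have "?x = prod_encode (pfst ?x, 0)" using z pe_split[of ?x] by simp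
    then show ?thesis using phi_rel.prec0[OF m RC_sem[OF r1 I1]] by simp
  qed
  have c9: "phi_rel (lvl ?n) ?p ?x ?y" if "?t = 9"
  proof -
    have m: "?p mod 9 = 7" and z: "0 < psnd ?x"
      and r1: "RC V ?s1 ?n ?p (prod_encode (pfst ?x, psnd ?x - 1)) (hY (chd ?s1))"
      and r2: "RC V ?s2 ?n (psnd (?p div 9)) (prod_encode (pfst ?x, prod_encode (psnd ?x - 1, hY (chd ?s1)))) ?y"
      using G that unfolding Gb_def Let_def by auto
    have "?x = prod_encode (pfst ?x, Suc (psnd ?x - 1))" using z pe_split[of ?x] by simp
    then show ?thesis using phi_rel.precS[OF m RC_sem[OF r1 I1] RC_sem[OF r2 I2]] by simp
  qed
  have c10: "phi_rel (lvl ?n) ?p ?x ?y" if "?t = 10"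
  proof -
    have m: "?p mod 9 = 8" and r1: "RC V ?s1 ?n (?p div 9) (prod_encode (?x, ?y)) 0"
      and r2: "MP V ?s2 ?n (?p div 9) ?x ?y"
      using G that unfolding Gb_def Let_def by auto
    show ?thesis by (rule phi_rel.mu[OF m RC_sem[OF r1 I1] MP_sem[OF r2 I2]])
  qed
  have c11: "\<forall>j<?y. \<exists>v>0. phi_rel (lvl ?n) ?p (prod_encode (?x, j)) v" if "?t = 11"
  proof (cases "?y = 0")
    case False
    then have r1: "MP V ?s1 ?n ?p ?x (?y - 1)" and r2: "RC V ?s2 ?n ?p (prod_encode (?x, ?y - 1)) (hY (chd ?s2))"
      and pos: "0 < hY (chd ?s2)"
      using G that unfolding Gb_def Let_def by auto
    have A: "\<forall>j<?y - 1. \<exists>v>0. phi_rel (lvl ?n) ?p (prod_encode (?x, j)) v" by (rule MP_sem[OF r1 I1])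
    have B: "phi_rel (lvl ?n) ?p (prod_encode (?x, ?y - 1)) (hY (chd ?s2))" by (rule RC_sem[OF r2 I2])
    show ?thesis
    proof (intro allI impI)
      fix j assume "j < ?y"
      then have "j < ?y - 1 \<or> j = ?y - 1" by auto
      then show "\<exists>v>0. phi_rel (lvl ?n) ?p (prod_encode (?x, j)) v" using A B pos by auto
    qed
  qed simp
  have "?t = 1 \<or> ?t = 2 \<or> ?t = 3 \<or> ?t = 4 \<or> ?t = 5 \<or> ?t = 6 \<or> ?t = 7 \<or> ?t = 8 \<or> ?t = 9 \<or> ?t = 10 \<or> ?t = 11"
    using basic(4) basic(5) by presburger
  then show ?case unfolding Sem_def using c1 c2 c3 c4 c5 c6 c7 c8 c9 c10 c11 by auto
qed

end


context itr begin

lemma mkV: "Gb a (u 0) (a 0) V (mk t h s1 s2) \<Longrightarrow> V (mk t h s1 s2)"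
  using V_unfold by blast

lemmas gsimps = Gb_def Let_def RC_def MP_def mk_gt

lemma mp_build: "1 \<le> N \<Longrightarrow> (\<forall>j<k. \<exists>v>0. \<exists>c. RC V c N q (prod_encode (x,j)) v) \<Longrightarrow> \<exists>c. MP V c N q x k"
proof (induction k)
  case 0
  have "V (mk 11 (hdr N q x 0) 0 0)" using 0 by (intro mkV) (simp add: gsimps)
  then show ?case unfolding MP_def by (intro exI[of _ "mk 11 (hdr N q x 0) 0 0"]) simp
next
  case (Suc k)
  then obtain c1 where c1: "MP V c1 N q x k" by auto
  obtain v c2 where v: "0 < v" and c2: "RC V c2 N q (prod_encode (x,k)) v" using Suc.prems by blast
  have "V (mk 11 (hdr N q x (Suc k)) c1 c2)" using Suc.prems(1) c1 c2 v
    by (intro mkV) (simp add: gsimps)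
  then show ?case unfolding MP_def by (intro exI[of _ "mk 11 (hdr N q x (Suc k)) c1 c2"]) simp
qed

lemma complete_aux: "\<forall>p x y. phi_rel (lvl n) p x y \<longrightarrow> 1 \<le> n \<longrightarrow> (\<exists>c. RC V c n p x y)"
proof (induction n)
  case 0 then show ?case by simp
next
  case (Suc n)
  have "\<exists>c. RC V c (Suc n) p x y" if "phi_rel (lvl (Suc n)) p x y" for p x y
    using that
  proof (induction rule: phi_rel.induct)
    case (zero e x)
    have "V (mk 1 (hdr (Suc n) e x 0) 0 0)" using zero by (intro mkV) (simp add: gsimps)
    then show ?case unfolding RC_def by (intro exI[of _ "mk 1 (hdr (Suc n) e x 0) 0 0"]) simp
  next
    case (succ e x)
    have "V (mk 2 (hdr (Suc n) e x (Suc x)) 0 0)" using succ by (intro mkV) (simp add: gsimps)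
    then show ?case unfolding RC_def by (intro exI[of _ "mk 2 (hdr (Suc n) e x (Suc x)) 0 0"]) simp
  next
    case (proj1 e x)
    have "V (mk 3 (hdr (Suc n) e x (pfst x)) 0 0)" using proj1 by (intro mkV) (simp add: gsimps)
    then show ?case unfolding RC_def by (intro exI[of _ "mk 3 (hdr (Suc n) e x (pfst x)) 0 0"]) simp
  next
    case (proj2 e x)
    have "V (mk 4 (hdr (Suc n) e x (psnd x)) 0 0)" using proj2 by (intro mkV) (simp add: gsimps)
    then show ?case unfolding RC_def by (intro exI[of _ "mk 4 (hdr (Suc n) e x (psnd x)) 0 0"]) simp
  next
    case (orc e x)
    obtain s1 where s1: "odd x \<Longrightarrow> 1 \<le> n \<Longrightarrow> RC V s1 n (a 0) (x div 2) (lvl (Suc n) x)"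
    proof (cases "odd x \<and> 1 \<le> n")
      case True
      have l: "lvl n = join a (u (n - 1))" by (simp add: lvl_def)
      have "phi_rel (lvl n) (a 0) (x div 2) (u n (x div 2))"
        using step[of "n - 1" "x div 2"] True unfolding l by simp
      then obtain c where "RC V c n (a 0) (x div 2) (u n (x div 2))" using Suc.IH True by blast
      moreover have "lvl (Suc n) x = u n (x div 2)" using True by (simp add: lvl_def join_def)
      ultimately show ?thesis using that by auto
    qed auto
    have "V (mk 5 (hdr (Suc n) e x (lvl (Suc n) x)) s1 0)"
    proof (intro mkV)
      have "(if even x then lvl (Suc n) x = a (x div 2) else if Suc n = 1 then lvl (Suc n) x = u 0 (x div 2)
                              else RC V s1 (Suc n - 1) (a 0) (x div 2) (lvl (Suc n) x))"
        using s1 by (auto simp: lvl_def join_def)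
      then show "Gb a (u 0) (a 0) V (mk 5 (hdr (Suc n) e x (lvl (Suc n) x)) s1 0)"
        using orc by (simp add: Gb_def Let_def mk_gt)
    qed
    then show ?case unfolding RC_def by (intro exI[of _ "mk 5 (hdr (Suc n) e x (lvl (Suc n) x)) s1 0"]) simp
  next
    case (comp e x z y)
    obtain c1 where c1: "RC V c1 (Suc n) (psnd (e div 9)) x z" using comp by blast
    obtain c2 where c2: "RC V c2 (Suc n) (pfst (e div 9)) z y" using comp by blast
    have "V (mk 6 (hdr (Suc n) e x y) c1 c2)" using comp(1) c1 c2 by (intro mkV) (simp add: gsimps)
    then show ?case unfolding RC_def by (intro exI[of _ "mk 6 (hdr (Suc n) e x y) c1 c2"]) simp
  next
    case (pair e x y1 y2)
    obtain c1 where c1: "RC V c1 (Suc n) (pfst (e div 9)) x y1" using pair by blast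
    obtain c2 where c2: "RC V c2 (Suc n) (psnd (e div 9)) x y2" using pair by blast
    have "V (mk 7 (hdr (Suc n) e x (prod_encode (y1, y2))) c1 c2)" using pair(1) c1 c2 by (intro mkV) (simp add: gsimps)
    then show ?case unfolding RC_def by (intro exI[of _ "mk 7 (hdr (Suc n) e x (prod_encode (y1, y2))) c1 c2"]) simp
  next
    case (prec0 e x y)
    obtain c1 where c1: "RC V c1 (Suc n) (pfst (e div 9)) x y" using prec0 by blast
    have "V (mk 8 (hdr (Suc n) e (prod_encode (x, 0)) y) c1 0)" using prec0(1) c1 by (intro mkV) (simp add: gsimps)
    then show ?case unfolding RC_def by (intro exI[of _ "mk 8 (hdr (Suc n) e (prod_encode (x, 0)) y) c1 0"]) simp
  next
    case (precS e x k z y)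
    obtain c1 where c1: "RC V c1 (Suc n) e (prod_encode (x, k)) z" using precS by blast
    obtain c2 where c2: "RC V c2 (Suc n) (psnd (e div 9)) (prod_encode (x, prod_encode (k, z))) y" using precS by blast
    have "V (mk 9 (hdr (Suc n) e (prod_encode (x, Suc k)) y) c1 c2)" using precS(1) c1 c2 by (intro mkV) (simp add: gsimps)
    then show ?case unfolding RC_def by (intro exI[of _ "mk 9 (hdr (Suc n) e (prod_encode (x, Suc k)) y) c1 c2"]) simp
  next
    case (mu e x k)
    obtain c1 where c1: "RC V c1 (Suc n) (e div 9) (prod_encode (x, k)) 0" using mu by blast
    have "\<forall>j<k. \<exists>v>0. \<exists>c. RC V c (Suc n) (e div 9) (prod_encode (x,j)) v" using mu by blast
    then have "\<exists>c. MP V c (Suc n) (e div 9) x k" by (intro mp_build) simp_all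
    then obtain c2 where c2: "MP V c2 (Suc n) (e div 9) x k" by blast
    have "V (mk 10 (hdr (Suc n) e x k) c1 c2)" using mu(1) c1 c2 by (intro mkV) (simp add: gsimps)
    then show ?case unfolding RC_def by (intro exI[of _ "mk 10 (hdr (Suc n) e x k) c1 c2"]) simp
  qed
  then show ?case by blast
qed

lemma complete: "phi_rel (lvl n) p x y \<Longrightarrow> 1 \<le> n \<Longrightarrow> \<exists>c. RC V c n p x y"
  using complete_aux by blast

lemma u_Suc: "phi_rel (lvl (Suc n)) (a 0) m (u (Suc n) m)"
  using step[of n m] by (simp add: lvl_def)

end


lemma cmpP_imp: "cmpP S P \<Longrightarrow> cmpP S Q \<Longrightarrow> cmpP S (\<lambda>Or x. P Or x \<longrightarrow> Q Or x)"
  using cmpP_or[OF cmpP_not] by simp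
lemma cmpP_if: assumes "cmpP S P" "cmpP S Q" "cmpP S R"
  shows "cmpP S (\<lambda>Or x. if P Or x then Q Or x else R Or x)"
proof -
  have "cmp S (\<lambda>Or x. if P Or x then (if Q Or x then 1 else 0) else (if R Or x then 1 else 0))"
    by (rule cmp_if) (use assms in \<open>simp_all add: cmpP_def\<close>)
  then show ?thesis unfolding cmpP_def by (rule cmp_ext) auto
qed

lemma cmp_Gb:
  assumes ca: "cmp S (\<lambda>Or. a)" and cv: "cmp S (\<lambda>Or. v0)" and H: "cmp S H" and C: "cmp S C"
  shows "cmpP S (\<lambda>Or x. Gb a v0 e (look (H Or x) (C Or x)) (C Or x))"
proof -
  have ra: "\<And>g. cmp S g \<Longrightarrow> cmp S (\<lambda>Or x. a (g Or x))" using cmp_comp[OF ca] by simp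
  have rv: "\<And>g. cmp S g \<Longrightarrow> cmp S (\<lambda>Or x. v0 (g Or x))" using cmp_comp[OF cv] by simp
  show ?thesis unfolding Gb_def Let_def RC_def MP_def look_def acc_defs hdr_def
    by (intro cmp_intros cmpP_imp cmpP_if ra rv H C)
qed

lemma hist_rec: "hist a v0 e c = rec_nat 0 (\<lambda>c r. prod_encode (if Gb a v0 e (look r c) c then 1 else 0, r)) c"
  by (induction c) auto

lemma cmp_hist:
  assumes ca: "cmp S (\<lambda>Or. a)" and cv: "cmp S (\<lambda>Or. v0)"
  shows "cmp S (\<lambda>Or c. hist a v0 e c)"
proof -
  have "cmp S (\<lambda>Or z. rec_nat ((\<lambda>Or x. 0) Or (pfst z))
      (\<lambda>k r. (\<lambda>Or x k r. prod_encode (if Gb a v0 e (look r k) k then 1 else 0, r)) Or (pfst z) k r) (psnd z))"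
  proof (rule cmp_prec0)
    show "cmp S (\<lambda>Or x. 0)" by (rule cmp_const)
    have gbP: "cmpP S (\<lambda>Or z. Gb a v0 e (look ((\<lambda>Or z. psnd (psnd z)) Or z) ((\<lambda>Or z. pfst (psnd z)) Or z)) ((\<lambda>Or z. pfst (psnd z)) Or z))"
      by (rule cmp_Gb[OF ca cv]) (intro cmp_intros)+
    then show "cmp S (\<lambda>Or z. (\<lambda>Or x k r. prod_encode (if Gb a v0 e (look r k) k then 1 else 0, r)) Or (pfst z) (pfst (psnd z)) (psnd (psnd z)))"
      by (intro cmp_pe cmp_if gbP cmp_intros)
  qed
  then have "cmp S (\<lambda>Or z. rec_nat 0 (\<lambda>k r. prod_encode (if Gb a v0 e (look r k) k then 1 else 0, r)) (psnd z))" by simp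
  from cmp_comp[OF this cmp_pe[OF cmp_const cmp_id]] show ?thesis
    by (simp add: hist_rec[symmetric])
qed

lemma cmp_V:
  assumes ca: "cmp S (\<lambda>Or. a)" and cv: "cmp S (\<lambda>Or. v0)" and g: "cmp S g"
  shows "cmpP S (\<lambda>Or x. Vc a v0 e (g Or x))"
  unfolding Vc_def by (rule cmp_Gb[OF ca cv cmp_comp[OF cmp_hist[OF ca cv] g] g])

context itr begin

lemma iter_cmp:
  assumes ca: "cmp S (\<lambda>Or. a)" and cv: "cmp S (\<lambda>Or. u 0)"
  shows "cmp S (\<lambda>Or z. u (pfst z) (psnd z))"
proof -
  define Q where "Q z c \<longleftrightarrow> (pfst z = 0 \<or> (V c \<and> 1 \<le> ctag c \<and> ctag c \<le> 10 \<and> hN (chd c) = pfst z \<and>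
    hP (chd c) = a 0 \<and> hX (chd c) = psnd z))" for z c
  have rv: "\<And>g. cmp S g \<Longrightarrow> cmp S (\<lambda>Or x. u 0 (g Or x))" using cmp_comp[OF cv] by simp
  have rV: "\<And>g. cmp S g \<Longrightarrow> cmpP S (\<lambda>Or x. V (g Or x))" by (rule cmp_V[OF ca cv])
  have ex: "\<exists>c. (if Q z c then 0 else 1) = (0::nat)" for z
  proof (cases "pfst z = 0")
    case False
    then obtain n where n: "pfst z = Suc n" by (cases "pfst z") auto
    obtain c where "RC V c (Suc n) (a 0) (psnd z) (u (Suc n) (psnd z))"
      using complete[OF u_Suc[of n "psnd z"]] by auto
    then have "Q z c" unfolding Q_def RC_def using n by auto
    then show ?thesis by auto
  qed (auto simp: Q_def)
  have cQ: "cmp S (\<lambda>Or w. (\<lambda>Or z c. if Q z c then 0 else 1) Or (pfst w) (psnd w))"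
    unfolding Q_def acc_defs by (simp, intro cmp_intros rV)
  have cM: "cmp S (\<lambda>Or z. LEAST c. (\<lambda>Or z c. if Q z c then 0 else (1::nat)) Or ((\<lambda>Or x. x) Or z) c = 0)"
    by (rule cmp_mu[OF cQ]) (simp_all add: ex cmp_id)
  have cF: "cmp S (\<lambda>Or z. if pfst z = 0 then u 0 (psnd z) else hY (chd (LEAST c. (if Q z c then 0 else (1::nat)) = 0)))"
    using cM unfolding acc_defs by (intro cmp_intros rv) simp_all
  show ?thesis
  proof (rule cmp_ext[OF cF])
    fix Or z
    show "(if pfst z = 0 then u 0 (psnd z) else hY (chd (LEAST c. (if Q z c then 0 else (1::nat)) = 0))) = u (pfst z) (psnd z)"
    proof (cases "pfst z = 0")
      case False
      then obtain n where n: "pfst z = Suc n" by (cases "pfst z") auto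
      let ?c = "LEAST c. (if Q z c then 0 else (1::nat)) = 0"
      have "(if Q z ?c then 0 else (1::nat)) = 0" using ex[of z] by (rule LeastI_ex)
      then have q: "Q z ?c" by (cases "Q z ?c") auto
      then have "V ?c" "1 \<le> ctag ?c" "ctag ?c \<le> 10" "hN (chd ?c) = Suc n" "hP (chd ?c) = a 0" "hX (chd ?c) = psnd z"
        unfolding Q_def using n by auto
      with sound[of ?c] have "phi_rel (lvl (Suc n)) (a 0) (psnd z) (hY (chd ?c))" unfolding Sem_def by auto
      with u_Suc[of n "psnd z"] phi_det have "hY (chd ?c) = u (Suc n) (psnd z)" by metis
      then show ?thesis using n by simp
    qed simp
  qed
qed

end


lemma pfst_le: "pfst x \<le> x" by (metis le_prod_encode_1 pe_split)
lemma psnd_le: "psnd x \<le> x" by (metis le_prod_encode_2 pe_split)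

function sbs :: "nat \<Rightarrow> nat \<Rightarrow> nat" where
"sbs q e = (if e mod 9 = 4 then q
  else if e mod 9 = 5 \<or> e mod 9 = 6 \<or> e mod 9 = 7 then e mod 9 + 9 * prod_encode (sbs q (pfst (e div 9)), sbs q (psnd (e div 9)))
  else if e mod 9 = 8 then 8 + 9 * sbs q (e div 9)
  else e)"
  by pat_completeness auto
termination
proof (relation "measure (\<lambda>(q,e). e)")
  show "wf (measure (\<lambda>(q, e). e))" by simp
next
  fix q e :: nat assume "e mod 9 \<noteq> 4" "e mod 9 = 5 \<or> e mod 9 = 6 \<or> e mod 9 = 7"
  then have "0 < e" by auto
  then have "e div 9 < e" by simp
  then show "((q, pfst (e div 9)), q, e) \<in> measure (\<lambda>(q, e). e)"
    "((q, psnd (e div 9)), q, e) \<in> measure (\<lambda>(q, e). e)"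
    using pfst_le[of "e div 9"] psnd_le[of "e div 9"] by auto
next
  fix q e :: nat assume "e mod 9 = 8"
  then have "0 < e" by auto
  then show "((q, e div 9), q, e) \<in> measure (\<lambda>(q, e). e)" by simp
qed

declare sbs.simps[simp del]

lemma sbs_correct:
  assumes "phi_rel O1 e x y" "\<And>n. phi_rel O2 q n (O1 n)"
  shows "phi_rel O2 (sbs q e) x y"
  using assms(1)
proof (induction rule: phi_rel.induct)
  case (zero e x) then show ?case by (subst sbs.simps) (simp add: phi_rel.zero)
next
  case (succ e x) then show ?case by (subst sbs.simps) (simp add: phi_rel.succ)
next
  case (proj1 e x) then show ?case by (subst sbs.simps) (simp add: phi_rel.proj1)
next
  case (proj2 e x) then show ?case by (subst sbs.simps) (simp add: phi_rel.proj2)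
next
  case (orc e x) then show ?case by (subst sbs.simps) (simp add: assms(2))
next
  case (comp e x z y)
  have "sbs q e = 5 + 9 * prod_encode (sbs q (pfst (e div 9)), sbs q (psnd (e div 9)))"
    using comp(1) by (subst sbs.simps) simp
  then show ?case using comp.IH comp.hyps(1) apply simp by (rule phi_rel.comp) simp_all
next
  case (pair e x y1 y2)
  have "sbs q e = 6 + 9 * prod_encode (sbs q (pfst (e div 9)), sbs q (psnd (e div 9)))"
    using pair(1) by (subst sbs.simps) simp
  then show ?case using pair.IH pair.hyps(1) apply simp by (rule phi_rel.pair) simp_all
next
  case (prec0 e x y)
  have "sbs q e = 7 + 9 * prod_encode (sbs q (pfst (e div 9)), sbs q (psnd (e div 9)))"
    using prec0(1) by (subst sbs.simps) simp
  then show ?case using prec0.IH prec0.hyps(1) apply simp by (rule phi_rel.prec0) simp_all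
next
  case (precS e x k z y)
  have "sbs q e = 7 + 9 * prod_encode (sbs q (pfst (e div 9)), sbs q (psnd (e div 9)))"
    using precS(1) by (subst sbs.simps) simp
  then show ?case using precS.IH precS.hyps(1) apply simp by (rule phi_rel.precS) simp_all
next
  case (mu e x k)
  have "sbs q e = 8 + 9 * sbs q (e div 9)"
    using mu(1) by (subst sbs.simps) simp
  then show ?case using mu.IH mu.hyps(1) apply simp apply (rule phi_rel.mu) by auto
qed


lemma Phi_of_rel: "phi_rel Or e x y \<Longrightarrow> Phi e Or x = Some y"
  unfolding Phi_def using phi_det by (auto intro!: the_equality)
lemma rel_of_Phi: "Phi e Or x = Some y \<Longrightarrow> phi_rel Or e x y"
  unfolding Phi_def by (metis Phi_def Phi_of_rel option.distinct(1) option.inject)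

lemma computable_cmp: "computable_in Z g \<longleftrightarrow> cmp {chi Z} (\<lambda>Or. g)"
  unfolding computable_in_def cmp_def using Phi_of_rel rel_of_Phi by blast

lemma K2_app_rel: "K2_app g h = Some r \<Longrightarrow> phi_rel (join g h) (g 0) m (r m)"
proof -
  assume a: "K2_app g h = Some r"
  then have t: "\<forall>n. Phi (g 0) (join g h) n \<noteq> None" and r: "r = (\<lambda>n. the (Phi (g 0) (join g h) n))"
    unfolding K2_app_def by (auto split: if_splits)
  from t obtain y where "Phi (g 0) (join g h) m = Some y" by blast
  then show ?thesis using r rel_of_Phi by simp
qed

lemma K2_app_of_rel: assumes "\<And>m. phi_rel (join g h) (g 0) m (r m)" shows "K2_app g h = Some r"
proof -
  have p: "Phi (g 0) (join g h) m = Some (r m)" for m using Phi_of_rel[OF assms] .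
  show ?thesis unfolding K2_app_def by (simp add: p)
qed

lemma carrier_mono: assumes "turing_le X Y" shows "K2_carrier X \<subseteq> K2_carrier Y"
proof
  fix g assume "g \<in> K2_carrier X"
  then obtain eg where eg: "\<And>n. phi_rel (chi X) eg n (g n)"
    unfolding K2_carrier_def computable_in_def using rel_of_Phi by blast
  obtain q where q: "\<And>n. phi_rel (chi Y) q n (chi X n)"
    using assms unfolding turing_le_def computable_in_def using rel_of_Phi by blast
  have "\<And>n. phi_rel (chi Y) (sbs q eg) n (g n)" using sbs_correct[OF eg q] .
  then show "g \<in> K2_carrier Y" unfolding K2_carrier_def computable_in_def using Phi_of_rel by blast
qed

lemma dir1: "turing_le X Y \<Longrightarrow> pca_embedding (K2_carrier X) K2_app (K2_carrier Y) K2_app id"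
  unfolding pca_embedding_def using carrier_mono by auto


lemma chi_01: "chi X n = 0 \<or> chi X n = 1" unfolding chi_def by auto

lemma const_carrier: "(\<lambda>_. k) \<in> K2_carrier Z"
  unfolding K2_carrier_def computable_cmp by (simp add: cmp_const)

lemma cmp_itr_rule:
  assumes "cmp S (\<lambda>Or z. w (pfst z) (psnd z))"
  shows "cmp S g \<Longrightarrow> cmp S h \<Longrightarrow> cmp S (\<lambda>Or x. w (g Or x) (h Or x))"
  using cmp_bin[of S "\<lambda>Or. w", OF assms] by simp

lemma iter_image:
  assumes emb: "pca_embedding (K2_carrier X) K2_app (K2_carrier Y) K2_app f"
    and sc: "s \<in> K2_carrier X" and pc: "\<And>n. p n \<in> K2_carrier X"
    and app: "\<And>n. K2_app s (p n) = Some (p (Suc n))"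
  shows "cmp {chi Y} (\<lambda>Or z. f (p (pfst z)) (psnd z))"
proof -
  have img: "\<And>x. x \<in> K2_carrier X \<Longrightarrow> f x \<in> K2_carrier Y" using emb unfolding pca_embedding_def by auto
  have "K2_app (f s) (f (p n)) = Some (f (p (Suc n)))" for n
    using emb sc pc app unfolding pca_embedding_def by blast
  then have "itr (f s) (\<lambda>n. f (p n))" by unfold_locales (rule K2_app_rel)
  moreover have "cmp {chi Y} (\<lambda>Or. f s)" using img[OF sc] unfolding K2_carrier_def computable_cmp by simp
  moreover have "cmp {chi Y} (\<lambda>Or. f (p 0))" using img[OF pc] unfolding K2_carrier_def computable_cmp by simp
  ultimately show ?thesis using itr.iter_cmp by blast
qed

lemma dir2:
  assumes emb: "pca_embedding (K2_carrier X) K2_app (K2_carrier Y) K2_app f"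
  shows "turing_le X Y"
proof -
  obtain e0 where e0: "\<And>Or x. phi_rel Or e0 x (prod_encode (Suc (pfst (Or 1)), psnd (Or 1)))"
  proof -
    have "cmp UNIV (\<lambda>Or x. prod_encode (Suc (pfst (Or 1)), psnd (Or 1)))" by (intro cmp_intros)
    then show ?thesis using that unfolding cmp_def by blast
  qed
  obtain e1 where e1: "\<And>Or x. phi_rel Or e1 x (prod_encode (Suc (pfst (Or 1)), Or (2 * Suc (pfst (Or 1)) + 2)))"
  proof -
    have "cmp UNIV (\<lambda>Or x. prod_encode (Suc (pfst (Or 1)), Or (2 * Suc (pfst (Or 1)) + 2)))" by (intro cmp_intros)
    then show ?thesis using that unfolding cmp_def by blast
  qed
  define s0 :: "nat \<Rightarrow> nat" where "s0 = (\<lambda>_. e0)"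
  define s1 :: "nat \<Rightarrow> nat" where "s1 = (\<lambda>j. if j = 0 then e1 else chi X (j - 1))"
  define P :: "nat \<Rightarrow> nat \<Rightarrow> nat" where "P n = (\<lambda>_. prod_encode (n, 0))" for n
  define Q :: "nat \<Rightarrow> nat \<Rightarrow> nat" where "Q n = (\<lambda>_. prod_encode (n, 1))" for n
  define W :: "nat \<Rightarrow> nat \<Rightarrow> nat" where "W n = (\<lambda>_. prod_encode (n, chi X n))" for n
  have s0c: "s0 \<in> K2_carrier X" unfolding s0_def by (rule const_carrier)
  have s1c: "s1 \<in> K2_carrier X"
  proof -
    have "cmp {chi X} (\<lambda>Or j. if j = 0 then e1 else Or (j - 1))" by (intro cmp_intros)
    then have "cmp {chi X} (\<lambda>Or. s1)" by (rule cmp_ext) (auto simp: s1_def)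
    then show ?thesis unfolding K2_carrier_def computable_cmp by simp
  qed
  have Pc: "P n \<in> K2_carrier X" and Qc: "Q n \<in> K2_carrier X" and Wc: "W n \<in> K2_carrier X" for n
    unfolding P_def Q_def W_def by (rule const_carrier)+
  have app0: "K2_app s0 (\<lambda>_. prod_encode (n, b)) = Some (\<lambda>_. prod_encode (Suc n, b))" for n b
    by (rule K2_app_of_rel) (use e0[of "join s0 (\<lambda>_. prod_encode (n, b))"] in \<open>simp add: join_def s0_def\<close>)
  have appP: "K2_app s0 (P n) = Some (P (Suc n))" for n unfolding P_def by (rule app0)
  have appQ: "K2_app s0 (Q n) = Some (Q (Suc n))" for n unfolding Q_def by (rule app0)
  have appW: "K2_app s1 (W n) = Some (W (Suc n))" for n
  proof (rule K2_app_of_rel)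
    fix m
    have j1: "join s1 (W n) 1 = prod_encode (n, chi X n)" by (simp add: join_def W_def)
    have j2: "join s1 (W n) (2 * Suc n + 2) = chi X (Suc n)" by (simp add: join_def s1_def)
    show "phi_rel (join s1 (W n)) (s1 0) m (W (Suc n) m)"
      using e1[of "join s1 (W n)" m] unfolding j1 pfst_pe psnd_pe j2 by (simp add: W_def s1_def)
  qed
  have cP: "cmp {chi Y} (\<lambda>Or z. f (P (pfst z)) (psnd z))" by (rule iter_image[where p=P, OF emb s0c Pc appP])
  have cQ: "cmp {chi Y} (\<lambda>Or z. f (Q (pfst z)) (psnd z))" by (rule iter_image[where p=Q, OF emb s0c Qc appQ])
  have cW: "cmp {chi Y} (\<lambda>Or z. f (W (pfst z)) (psnd z))" by (rule iter_image[where p=W, OF emb s1c Wc appW])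
  note rP = cmp_itr_rule[OF cP] and rQ = cmp_itr_rule[OF cQ] and rW = cmp_itr_rule[OF cW]
  have inj: "inj_on f (K2_carrier X)" using emb unfolding pca_embedding_def by auto
  have PQ: "f (P n) \<noteq> f (Q n)" for n
  proof
    assume "f (P n) = f (Q n)"
    then have "P n = Q n" using inj Pc Qc by (meson inj_onD)
    then show False unfolding P_def Q_def by (metis prod_encode_eq prod.inject zero_neq_one)
  qed
  define h where "h n m = (if f (W n) m \<noteq> f (P n) m \<or> f (W n) m \<noteq> f (Q n) m then 0 else (1::nat))" for n m
  have hc: "cmp {chi Y} (\<lambda>Or z. h (pfst z) (psnd z))" unfolding h_def by (intro cmp_intros rP rQ rW)
  have hex: "\<exists>m. h n m = 0" for n
  proof -
    obtain m where "f (P n) m \<noteq> f (Q n) m" using PQ[of n] by blast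
    then have "h n m = 0" unfolding h_def by auto
    then show ?thesis by blast
  qed
  define mm where "mm n = (LEAST m. h n m = 0)" for n
  have cmm: "cmp {chi Y} (\<lambda>Or n. mm n)"
    unfolding mm_def using cmp_mu[of "{chi Y}" "\<lambda>Or. h", OF hc _ cmp_id] hex by simp
  have final: "cmp {chi Y} (\<lambda>Or n. if f (W n) (mm n) \<noteq> f (P n) (mm n) then 1 else 0)"
    by (intro cmp_intros rP rW cmm)
  have eq: "(if f (W n) (mm n) \<noteq> f (P n) (mm n) then 1 else 0) = chi X n" for n
  proof -
    have hm: "h n (mm n) = 0" unfolding mm_def using hex[of n] by (rule LeastI_ex)
    show ?thesis
    proof (cases "chi X n = 0")
      case True
      then have "W n = P n" unfolding W_def P_def by simp
      then show ?thesis using True by simp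
    next
      case False
      then have c1: "chi X n = 1" using chi_01 by metis
      then have "W n = Q n" unfolding W_def Q_def by simp
      then have "f (W n) (mm n) \<noteq> f (P n) (mm n)" using hm unfolding h_def by (auto split: if_splits)
      then show ?thesis using c1 by simp
    qed
  qed
  have "cmp {chi Y} (\<lambda>Or. chi X)" by (rule cmp_ext[OF final]) (simp add: eq)
  then show ?thesis unfolding turing_le_def computable_cmp .
qed

theorem theorem6p6:
  fixes X Y :: "nat set"
  shows "(\<exists>f. pca_embedding (K2_carrier X) K2_app (K2_carrier Y) K2_app f) \<longleftrightarrow> turing_le X Y"
  using dir1 dir2 by blast


end
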